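(* Let $n=2k$ be a positive even integer, let $f$ be a bent Boolean function on $\mathbb{F}_{2^n}$, and let $a_1,a_2,a_3\in\mathbb{F}_{2^n}$. Put $f_i(x)=f(x)+\mathrm{Tr}^n_1(a_ix)$ for $i=1,2,3$ and $$\sigma=f_1f_2+f_1f_3+f_2f_3=f(x)+\mathrm{Tr}^n_1(a_1x)\mathrm{Tr}^n_1(a_2x)+\mathrm{Tr}^n_1(a_1x)\mathrm{Tr}^n_1(a_3x)+\mathrm{Tr}^n_1(a_2x)\mathrm{Tr}^n_1(a_3x).$$ Then $\sigma$ is bent if and only if $D_{a_1+a_2}D_{a_1+a_3}f^*=0$, and $\sigma$ is semi-bent if and only if $D_{a_1+a_2}D_{a_1+a_3}f^*=1$ (the constant function $1$). If $\sigma$ is bent, then $$\sigma^*(x)=f^*(x+a_1)f^*(x+a_2)+f^*(x+a_1)f^*(x+a_3)+f^*(x+a_2)f^*(x+a_3).$$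
   Context: For a Boolean function $f:\mathbb{F}_{2^n}\to\mathbb{F}_2$, $W_f(a)=\sum_{x}(-1)^{f(x)+\mathrm{Tr}^n_1(ax)}$ with $\mathrm{Tr}^n_1(x)=\sum_{i=0}^{n-1}x^{2^i}$. $f$ is bent if $|W_f(a)|=2^{n/2}$ for all $a$, and its dual $f^*$ is defined by $W_f(a)=2^{n/2}(-1)^{f^*(a)}$. $f$ is semi-bent if $W_f$ takes values in $\{0,\pm2^{n/2+1}\}$. Derivatives: $D_af(x)=f(x)+f(x+a)$ and $D_aD_bf(x)=f(x)+f(x+a)+f(x+b)+f(x+a+b)$. *)

theory Defs
  imports Main
begin

text \<open>The field F_{2^n} is modelled by a finite field type 'a of cardinality 2^n and
characteristic 2. Boolean functions are 'a \<Rightarrow> bool; addition in F_2 is xor (\<noteq>),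
multiplication is conjunction.\<close>

definition tr :: "nat \<Rightarrow> 'a::field \<Rightarrow> 'a" where
  "tr n x = (\<Sum>i<n. x ^ (2 ^ i))"

definition trb :: "nat \<Rightarrow> 'a::field \<Rightarrow> bool" where
  "trb n x = (tr n x = 1)"

definition walsh :: "nat \<Rightarrow> ('a::{field,finite} \<Rightarrow> bool) \<Rightarrow> 'a \<Rightarrow> int" where
  "walsh n f a = (\<Sum>x\<in>UNIV. (-1::int) ^ (of_bool (f x) + of_bool (trb n (a * x))))"

definition bent :: "nat \<Rightarrow> ('a::{field,finite} \<Rightarrow> bool) \<Rightarrow> bool" where
  "bent n f = (\<forall>a. \<bar>walsh n f a\<bar> = 2 ^ (n div 2))"

definition dual :: "nat \<Rightarrow> ('a::{field,finite} \<Rightarrow> bool) \<Rightarrow> 'a \<Rightarrow> bool" where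
  "dual n f a = (walsh n f a = - (2 ^ (n div 2)))"

definition semibent :: "nat \<Rightarrow> ('a::{field,finite} \<Rightarrow> bool) \<Rightarrow> bool" where
  "semibent n f = (\<forall>a. walsh n f a \<in> {0, 2 ^ (n div 2 + 1), - (2 ^ (n div 2 + 1))})"

definition bderiv :: "'a::plus \<Rightarrow> ('a \<Rightarrow> bool) \<Rightarrow> 'a \<Rightarrow> bool" where
  "bderiv a g x = (g x \<noteq> g (x + a))"

end

theory Submission imports Defs begin

lemma char2_add_self:
  assumes "(1::'a::field) + 1 = 0" shows "(y::'a) + y = 0"
proof -
  have "y + y = (1+1)*y" by (simp add: distrib_right)
  thus ?thesis using assms by simp
qed

lemma pow_card_minus1:
  fixes x :: "'a::{field,finite}"
  assumes "x \<noteq> 0" shows "x ^ (card (UNIV::'a set) - 1) = 1"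
proof -
  let ?A = "UNIV - {0::'a}"
  have bij: "bij_betw (\<lambda>y. x * y) ?A ?A"
  proof (rule bij_betw_imageI)
    show "inj_on (\<lambda>y. x * y) ?A" unfolding inj_on_def using assms by auto
    show "(\<lambda>y. x * y) ` ?A = ?A"
    proof
      show "(\<lambda>y. x * y) ` ?A \<subseteq> ?A" using assms by auto
      show "?A \<subseteq> (\<lambda>y. x * y) ` ?A"
      proof
        fix z assume "z \<in> ?A"
        hence "z / x \<in> ?A" "z = x * (z / x)" using assms by auto
        thus "z \<in> (\<lambda>y. x * y) ` ?A" by blast
      qed
    qed
  qed
  have "prod (\<lambda>y. x * y) ?A = prod id ?A"
    using prod.reindex_bij_betw[OF bij, of id] by simp
  moreover have "prod (\<lambda>y. x * y) ?A = x ^ card ?A * prod id ?A"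
    by (simp add: prod.distrib)
  moreover have "prod id ?A \<noteq> 0" by simp
  moreover have "card ?A = card (UNIV::'a set) - 1" by (simp add: card_Diff_singleton)
  ultimately show ?thesis by (metis mult_cancel_right1)
qed

lemma frob:
  fixes x :: "'a::{field,finite}"
  assumes "card (UNIV :: 'a set) = 2 ^ n" shows "x ^ (2 ^ n) = x"
proof (cases "x = 0")
  case True thus ?thesis by simp
next
  case False
  have "x ^ (2^n) = x * x ^ (2^n - 1)"
  proof -
    have "(2::nat)^n = Suc (2^n - 1)" by simp
    thus ?thesis by (metis power_Suc)
  qed
  thus ?thesis using pow_card_minus1[OF False] assms by simp
qed

lemma sq_add_char2:
  assumes "(1::'a::field) + 1 = 0" shows "((u::'a) + v)^2 = u^2 + v^2"
proof -
  have "(u+v)^2 = u^2 + v^2 + (u*v + u*v)" by (simp add: power2_eq_square algebra_simps)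
  thus ?thesis using char2_add_self[OF assms] by simp
qed

lemma pow2_add_char2:
  assumes "(1::'a::field) + 1 = 0" shows "((u::'a) + v)^(2^i) = u^(2^i) + v^(2^i)"
proof (induction i)
  case 0 then show ?case by simp
next
  case (Suc i)
  have "(u+v)^(2^Suc i) = ((u+v)^(2^i))^2" by (simp add: power_mult[symmetric] mult.commute)
  also have "\<dots> = (u^(2^i))^2 + (v^(2^i))^2" using Suc sq_add_char2[OF assms] by simp
  also have "\<dots> = u^(2^Suc i) + v^(2^Suc i)" by (simp add: power_mult[symmetric] mult.commute)
  finally show ?case .
qed

lemma sq_sum_char2:
  assumes "(1::'a::field) + 1 = 0" shows "(\<Sum>i<(m::nat). (g i::'a))^2 = (\<Sum>i<m. (g i)^2)"
  by (induction m) (simp_all add: sq_add_char2[OF assms])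

lemma tr_add:
  assumes "(1::'a::field) + 1 = 0" shows "tr n ((x::'a) + y) = tr n x + tr n y"
  unfolding tr_def by (simp add: pow2_add_char2[OF assms] sum.distrib)

lemma tr01:
  fixes x :: "'a::{field,finite}"
  assumes card: "card (UNIV :: 'a set) = 2 ^ n" and c2: "(1::'a) + 1 = 0"
  shows "tr n x = 0 \<or> tr n x = 1"
proof -
  let ?g = "\<lambda>i. x ^ (2^i)"
  have "(tr n x)^2 = (\<Sum>i<n. (?g i)^2)" unfolding tr_def by (rule sq_sum_char2[OF c2])
  also have "\<dots> = (\<Sum>i<n. ?g (Suc i))" by (simp add: power_mult[symmetric] mult.commute)
  also have "\<dots> = tr n x"
  proof -
    have "(\<Sum>i<Suc n. ?g i) = ?g 0 + (\<Sum>i<n. ?g (Suc i))" by (rule sum.lessThan_Suc_shift)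
    moreover have "(\<Sum>i<Suc n. ?g i) = (\<Sum>i<n. ?g i) + ?g n" by simp
    moreover have "?g n = x" using frob[OF card] .
    ultimately show ?thesis unfolding tr_def by simp
  qed
  finally have "(tr n x)^2 = tr n x" .
  hence "tr n x * (tr n x - 1) = 0" by (simp add: power2_eq_square algebra_simps)
  thus ?thesis by auto
qed

lemma trb_add:
  fixes x :: "'a::{field,finite}"
  assumes card: "card (UNIV :: 'a set) = 2 ^ n" and c2: "(1::'a) + 1 = 0"
  shows "trb n (x + y) = (trb n x \<noteq> trb n y)"
  using tr01[OF card c2, of x] tr01[OF card c2, of y] tr_add[OF c2, of n x y] c2
  unfolding trb_def by auto

definition S :: "bool \<Rightarrow> int" where "S p = (if p then -1 else 1)"

lemma walsh_S: "walsh n f a = (\<Sum>x\<in>UNIV. S (f x) * S (trb n (a * x)))"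
  unfolding walsh_def S_def by (intro sum.cong) auto

lemma S_xor: "S (p \<noteq> q) = S p * S q" by (simp add: S_def)

lemma caseA: "(c::int) > 0 \<Longrightarrow> \<bar>c * (S d1 + S d2 + S d3 - S d4)\<bar> = 2*c \<longleftrightarrow> \<not>((d1\<noteq>d2)\<noteq>(d3\<noteq>d4))"
  by (cases d1; cases d2; cases d3; cases d4) (simp_all add: S_def abs_mult)
lemma caseB: "(c::int) > 0 \<Longrightarrow> c * (S d1 + S d2 + S d3 - S d4) \<in> {0, 4*c, -(4*c)} \<longleftrightarrow> ((d1\<noteq>d2)\<noteq>(d3\<noteq>d4))"
  by (cases d1; cases d2; cases d3; cases d4) (simp_all add: S_def)
lemma caseC: "(c::int) > 0 \<Longrightarrow> \<not>((d1\<noteq>d2)\<noteq>(d3\<noteq>d4)) \<Longrightarrow> (c * (S d1 + S d2 + S d3 - S d4) = -(2*c)) = (((d1 \<and> d2) \<noteq> (d1 \<and> d3)) \<noteq> (d2 \<and> d3))"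
  by (cases d1; cases d2; cases d3; cases d4) (simp_all add: S_def)

theorem proposition1:
  fixes f :: "'a::{field,finite} \<Rightarrow> bool" and n k :: nat and a1 a2 a3 :: 'a
  assumes card: "card (UNIV :: 'a set) = 2 ^ n"
    and char2: "(1::'a) + 1 = 0"
    and nk: "n = 2 * k" and kpos: "0 < k"
    and fbent: "bent n f"
  defines "f1 \<equiv> (\<lambda>x. f x \<noteq> trb n (a1 * x))"
    and "f2 \<equiv> (\<lambda>x. f x \<noteq> trb n (a2 * x))"
    and "f3 \<equiv> (\<lambda>x. f x \<noteq> trb n (a3 * x))"
  defines "\<sigma> \<equiv> (\<lambda>x. ((f1 x \<and> f2 x) \<noteq> (f1 x \<and> f3 x)) \<noteq> (f2 x \<and> f3 x))"
  shows "(bent n \<sigma> \<longleftrightarrow> (\<forall>x. \<not> bderiv (a1 + a2) (bderiv (a1 + a3) (dual n f)) x))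
    \<and> (semibent n \<sigma> \<longleftrightarrow> (\<forall>x. bderiv (a1 + a2) (bderiv (a1 + a3) (dual n f)) x))
    \<and> (bent n \<sigma> \<longrightarrow> (\<forall>x. dual n \<sigma> x =
          (((dual n f (x + a1) \<and> dual n f (x + a2)) \<noteq> (dual n f (x + a1) \<and> dual n f (x + a3)))
            \<noteq> (dual n f (x + a2) \<and> dual n f (x + a3)))))"
proof -
  have tadd: "\<And>u v::'a. trb n (u + v) = (trb n u \<noteq> trb n v)" by (rule trb_add[OF card char2])
  have nd: "n div 2 = k" using nk by simp
  define c :: int where "c = 2 ^ (k - 1)"
  have cpos: "c > 0" unfolding c_def by simp
  have c2k: "(2::int) ^ k = 2 * c" unfolding c_def using kpos
    by (cases k) simp_all
  have c2k1: "(2::int) ^ (k + 1) = 4 * c" using c2k by simp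
  define E where "E y = S (dual n f y)" for y
  have Wf: "walsh n f y = 2 * c * E y" for y
  proof -
    have "\<bar>walsh n f y\<bar> = 2 * c" using fbent c2k nd unfolding bent_def by simp
    thus ?thesis unfolding E_def S_def dual_def using c2k nd cpos by auto
  qed
  have key: "2 * walsh n \<sigma> b = walsh n f (b+a1) + walsh n f (b+a2) + walsh n f (b+a3)
      - walsh n f (b+a1+a2+a3)" for b
  proof -
    have pt: "2 * (S (\<sigma> x) * S (trb n (b * x))) =
       S (f x) * S (trb n ((b+a1) * x)) + S (f x) * S (trb n ((b+a2) * x))
       + S (f x) * S (trb n ((b+a3) * x)) - S (f x) * S (trb n ((b+a1+a2+a3) * x))" for x
      unfolding distrib_right tadd \<sigma>_def f1_def f2_def f3_def
      by (cases "f x"; cases "trb n (a1*x)"; cases "trb n (a2*x)"; cases "trb n (a3*x)";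
          cases "trb n (b*x)") (simp_all add: S_def)
    show ?thesis unfolding walsh_S sum_distrib_left pt
      by (simp add: sum.distrib sum_subtractf)
  qed
  have Ws: "walsh n \<sigma> b = c * (E (b+a1) + E (b+a2) + E (b+a3) - E (b+a1+a2+a3))" for b
    using key[of b] unfolding Wf by (simp add: algebra_simps)
  define P where "P b = ((dual n f (b+a1) \<noteq> dual n f (b+a2)) \<noteq> (dual n f (b+a3) \<noteq> dual n f (b+a1+a2+a3)))" for b
  have A: "\<bar>walsh n \<sigma> b\<bar> = 2 ^ (n div 2) \<longleftrightarrow> \<not> P b" for b
    unfolding Ws nd c2k P_def E_def by (rule caseA[OF cpos])
  have B: "walsh n \<sigma> b \<in> {0, 2 ^ (n div 2 + 1), - (2 ^ (n div 2 + 1))} \<longleftrightarrow> P b" for b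
    unfolding Ws nd c2k1 P_def E_def by (rule caseB[OF cpos])
  have C: "dual n \<sigma> b = (((dual n f (b + a1) \<and> dual n f (b + a2)) \<noteq> (dual n f (b + a1) \<and> dual n f (b + a3)))
            \<noteq> (dual n f (b + a2) \<and> dual n f (b + a3)))" if "\<not> P b" for b
    unfolding dual_def[of n \<sigma> b] Ws nd c2k E_def by (rule caseC[OF cpos that[unfolded P_def]])
  have aa: "a1 + a1 = 0" by (rule char2_add_self[OF char2])
  have DD: "bderiv (a1 + a2) (bderiv (a1 + a3) (dual n f)) (b + a1) = P b" for b
  proof -
    have e1: "b + a1 + (a1 + a3) = b + a3"
    proof - have "b + a1 + (a1 + a3) = b + a3 + (a1 + a1)" by (simp add: algebra_simps)
      thus ?thesis using aa by simp qed
    have e2: "b + a1 + (a1 + a2) = b + a2"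
    proof - have "b + a1 + (a1 + a2) = b + a2 + (a1 + a1)" by (simp add: algebra_simps)
      thus ?thesis using aa by simp qed
    have e3: "b + a2 + (a1 + a3) = b + a1 + a2 + a3" by (simp add: algebra_simps)
    show ?thesis unfolding bderiv_def P_def e1 e2 e3 by auto
  qed
  have DDall: "(\<forall>x. Q (bderiv (a1 + a2) (bderiv (a1 + a3) (dual n f)) x)) \<longleftrightarrow> (\<forall>b. Q (P b))" for Q
  proof
    assume h: "\<forall>x. Q (bderiv (a1 + a2) (bderiv (a1 + a3) (dual n f)) x)"
    show "\<forall>b. Q (P b)"
    proof
      fix b
      have "Q (bderiv (a1 + a2) (bderiv (a1 + a3) (dual n f)) (b + a1))" using h by blast
      thus "Q (P b)" using DD by simp
    qed
  next
    assume h: "\<forall>b. Q (P b)"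
    show "\<forall>x. Q (bderiv (a1 + a2) (bderiv (a1 + a3) (dual n f)) x)"
    proof
      fix x
      have xe: "x + a1 + a1 = x" using aa by (simp add: add.assoc)
      have "Q (P (x + a1))" using h by blast
      hence "Q (bderiv (a1 + a2) (bderiv (a1 + a3) (dual n f)) (x + a1 + a1))" by (simp only: DD)
      thus "Q (bderiv (a1 + a2) (bderiv (a1 + a3) (dual n f)) x)" using xe by simp
    qed
  qed
  have bentiff: "bent n \<sigma> \<longleftrightarrow> (\<forall>b. \<not> P b)" unfolding bent_def using A by simp
  have semiff: "semibent n \<sigma> \<longleftrightarrow> (\<forall>b. P b)" unfolding semibent_def using B by simp
  show ?thesis
    using bentiff semiff C DDall[of "\<lambda>t. \<not> t"] DDall[of "\<lambda>t. t"] by auto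
qed

end
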